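(* Let $K=\mathbb{Q}(\sqrt{d})$ with $d>1$ square-free, let $R_K$ be its regulator, and let $a=a_1+a_2\sqrt{d}$ ($a_1,a_2\in\mathbb{Q}$) be a totally positive element of $K$. Then $a\in\mathcal{F}_K$ if and only if $$\frac{|a_2|}{a_1}\le\frac{\tanh(R_K)}{\sqrt{d}}.$$
   Context: For a totally real number field $K$ with unit group $\mathcal{O}_K^\times$, a totally positive $a\in K$ is called reduced if $\mathrm{Tr}_{K/\mathbb{Q}}(a)\le \mathrm{Tr}_{K/\mathbb{Q}}(au^2)$ for all $u\in\mathcal{O}_K^\times$; $\mathcal{F}_K$ denotes the set of reduced totally positive elements. For a real quadratic field, $R_K=\log u$ where $u>1$ is the fundamental unit. *)

theory Defs
  imports Complex_Main "HOL-Computational_Algebra.Polynomial" "HOL-Computational_Algebra.Squarefree"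
begin

text \<open>Elements of K = Q(sqrt d) are represented as pairs (a1,a2) of rationals,
  standing for a1 + a2 sqrt d.\<close>

type_synonym qelt = "rat \<times> rat"

definition qmult :: "int \<Rightarrow> qelt \<Rightarrow> qelt \<Rightarrow> qelt" where
  "qmult d a b = (fst a * fst b + of_int d * snd a * snd b, fst a * snd b + snd a * fst b)"

definition emb1 :: "int \<Rightarrow> qelt \<Rightarrow> real" where
  "emb1 d a = real_of_rat (fst a) + real_of_rat (snd a) * sqrt (real_of_int d)"

definition emb2 :: "int \<Rightarrow> qelt \<Rightarrow> real" where
  "emb2 d a = real_of_rat (fst a) - real_of_rat (snd a) * sqrt (real_of_int d)"

definition qtrace :: "int \<Rightarrow> qelt \<Rightarrow> real" where
  "qtrace d a = emb1 d a + emb2 d a"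

definition totally_positive :: "int \<Rightarrow> qelt \<Rightarrow> bool" where
  "totally_positive d a \<longleftrightarrow> emb1 d a > 0 \<and> emb2 d a > 0"

definition in_OK :: "int \<Rightarrow> qelt \<Rightarrow> bool" where
  "in_OK d a \<longleftrightarrow> (\<exists>p :: int poly. lead_coeff p = 1 \<and> poly (map_poly real_of_int p) (emb1 d a) = 0)"

definition is_unit_OK :: "int \<Rightarrow> qelt \<Rightarrow> bool" where
  "is_unit_OK d u \<longleftrightarrow> in_OK d u \<and> (\<exists>v. in_OK d v \<and> qmult d u v = (1, 0))"

definition regulator :: "int \<Rightarrow> real" where
  "regulator d = ln (Inf {emb1 d u | u. is_unit_OK d u \<and> emb1 d u > 1})"

definition reduced :: "int \<Rightarrow> qelt \<Rightarrow> bool" where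
  "reduced d a \<longleftrightarrow> totally_positive d a \<and>
     (\<forall>u. is_unit_OK d u \<longrightarrow> qtrace d a \<le> qtrace d (qmult d a (qmult d u u)))"

end

theory Submission
  imports Defs "HOL-Analysis.Kronecker_Approximation_Theorem" "Berlekamp_Zassenhaus.Factor_Bound"
begin


lemma sqrt_irrat:
  fixes d :: int assumes "d > 1" "squarefree d"
  shows "sqrt (real_of_int d) \<notin> \<rat>"
proof
  assume "sqrt (real_of_int d) \<in> \<rat>"
  then obtain m n :: nat where n: "n \<noteq> 0" and mn: "\<bar>sqrt (real_of_int d)\<bar> = real m / real n"
    and cop: "algebraic_semidom_class.coprime m n" by (rule Rats_abs_nat_div_natE)
  have sq: "sqrt (real_of_int d) = real m / real n" using mn assms(1) by simp
  have "(sqrt (real_of_int d))^2 = real_of_int d" using assms(1) by simp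
  then have "real_of_int d = (real m / real n)^2" using sq by simp
  then have "real_of_int d * (real n)^2 = (real m)^2" using n by (simp add: field_simps)
  then have "real_of_int (d * (int n)^2) = real_of_int ((int m)^2)" by simp
  then have eq: "d * (int n)^2 = (int m)^2" by (simp only: of_int_eq_iff)
  have "(int n)^2 dvd (int m)^2" using eq by (metis dvd_triv_right)
  then have dv: "n dvd m" by simp
  have "n = 1" using coprime_common_divisor_nat[of m n n] dv cop by simp
  with eq have "d = (int m)^2" by simp
  then have "(int m)^2 dvd d" by simp
  with assms(2) have "int m dvd 1" unfolding squarefree_def by blast
  then have "d = 1" using \<open>d = (int m)^2\<close> by (simp add: zdvd1_eq)
  with assms(1) show False by simp
qed

lemma lin_indep:
  fixes d :: int assumes "d > 1" "squarefree d"
    and "real_of_rat r0 + real_of_rat r1 * sqrt (real_of_int d) = 0"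
  shows "r0 = 0 \<and> r1 = 0"
proof -
  have r1: "r1 = 0"
  proof (rule ccontr)
    assume "r1 \<noteq> 0"
    then have "sqrt (real_of_int d) = real_of_rat (- r0 / r1)"
      using assms(3) by (simp add: of_rat_divide of_rat_minus field_simps)
    then have "sqrt (real_of_int d) \<in> \<rat>" by (simp add: Rats_def)
    with sqrt_irrat[OF assms(1,2)] show False by simp
  qed
  with assms(3) show ?thesis by simp
qed

definition qnorm :: "int \<Rightarrow> qelt \<Rightarrow> rat" where
  "qnorm d a = fst a ^ 2 - of_int d * snd a ^ 2"

lemma sqrt_sq: "d \<ge> 0 \<Longrightarrow> sqrt (real_of_int d) * sqrt (real_of_int d) = real_of_int d"
  by simp

lemma alg1: "(t::real) * t = D \<Longrightarrow> (a1*b1 + D*a2*b2) + (a1*b2+a2*b1) * t = (a1 + a2 * t)*(b1+b2 * t)"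
  by (hypsubst_thin) (simp add: algebra_simps)
lemma alg2: "(t::real) * t = D \<Longrightarrow> (a1*b1 + D*a2*b2) - (a1*b2+a2*b1) * t = (a1 - a2 * t)*(b1-b2 * t)"
  by (hypsubst_thin) (simp add: algebra_simps)
lemma alg3: "(t::real) * t = D \<Longrightarrow> (a1 + a2 * t)*(a1-a2 * t) = a1^2 - D*a2^2"
  by (hypsubst_thin) (simp add: algebra_simps power2_eq_square)

lemma emb1_mult: assumes "d \<ge> 0" shows "emb1 d (qmult d a b) = emb1 d a * emb1 d b"
proof -
  obtain a1 a2 b1 b2 where ab: "a = (a1, a2)" "b = (b1, b2)" by (cases a, cases b)
  have s: "sqrt (real_of_int d) * sqrt (real_of_int d) = real_of_int d" using assms by simp
  show ?thesis unfolding ab emb1_def qmult_def fst_conv snd_conv of_rat_add of_rat_mult of_rat_of_int_eq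
    by (rule alg1[OF s])
qed

lemma emb2_mult: assumes "d \<ge> 0" shows "emb2 d (qmult d a b) = emb2 d a * emb2 d b"
proof -
  obtain a1 a2 b1 b2 where ab: "a = (a1, a2)" "b = (b1, b2)" by (cases a, cases b)
  have s: "sqrt (real_of_int d) * sqrt (real_of_int d) = real_of_int d" using assms by simp
  show ?thesis unfolding ab emb2_def qmult_def fst_conv snd_conv of_rat_add of_rat_mult of_rat_of_int_eq
    by (rule alg2[OF s])
qed

lemma emb_norm: assumes "d \<ge> 0" shows "emb1 d a * emb2 d a = real_of_rat (qnorm d a)"
proof -
  obtain a1 a2 where ab: "a = (a1, a2)" by (cases a)
  have s: "sqrt (real_of_int d) * sqrt (real_of_int d) = real_of_int d" using assms by simp
  show ?thesis unfolding ab emb2_def emb1_def qnorm_def fst_conv snd_conv of_rat_diff of_rat_mult of_rat_power of_rat_of_int_eq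
    by (rule alg3[OF s])
qed

lemma qnorm_mult: "qnorm d (qmult d a b) = qnorm d a * qnorm d b"
  by (cases a, cases b) (simp add: qnorm_def qmult_def power2_eq_square algebra_simps)

lemma qmult_comm: "qmult d a b = qmult d b a"
  by (cases a, cases b) (simp add: qmult_def algebra_simps)

lemma monic_factor_int:
  fixes p :: "int poly" and g :: "rat poly"
  assumes p: "lead_coeff p = 1" and dv: "g dvd of_int_poly p" and g: "lead_coeff g = 1"
  shows "Polynomial.coeff g i \<in> \<int>"
proof -
  obtain h where gh: "of_int_poly p = g * h" using dv by (auto elim: dvdE)
  obtain r rg where rr: "rat_to_normalized_int_poly g = (r, rg)" by force
  from rat_to_int_factor_explicit[OF gh rr] obtain r' where
    prg: "p = rg * Polynomial.smult (Polynomial.content p) r'" by blast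
  have "lead_coeff p = lead_coeff rg * lead_coeff (Polynomial.smult (Polynomial.content p) r')"
    using prg by (metis lead_coeff_mult)
  then have "lead_coeff rg dvd 1" using p by (metis dvd_triv_left)
  then have lr: "lead_coeff rg = 1 \<or> lead_coeff rg = -1" using zdvd1_eq by auto
  have gr: "g = Polynomial.smult r (of_int_poly rg)" using rat_to_normalized_int_poly(1)[OF rr] .
  have "r > 0" using rat_to_normalized_int_poly(2)[OF rr] .
  have "lead_coeff g = r * of_int (lead_coeff rg)" using gr by simp
  with g lr \<open>r > 0\<close> have "r = 1" by auto
  then show ?thesis using gr by simp
qed

lemma deg1_poly: "degree (r::'a::zero poly) \<le> 1 \<Longrightarrow> r = [:Polynomial.coeff r 0, Polynomial.coeff r 1:]"
  by (rule poly_eqI) (auto simp: coeff_pCons coeff_eq_0 split: nat.split)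

lemma lin_map: "poly (map_poly real_of_rat [:a, b:]) z = real_of_rat a + z * real_of_rat b"
  by (simp add: Polynomial.map_poly_pCons)

lemma map_of_int_rat: "map_poly real_of_rat (of_int_poly p) = map_poly real_of_int p"
  by (simp add: map_poly_map_poly o_def)

lemma alg4: "(t::real) * t = D \<Longrightarrow> N = x^2 - D*y^2 \<Longrightarrow> N + (x + y * t) * (- (2*x) + (x + y * t)) = 0"
  by (hypsubst_thin) (simp add: algebra_simps power2_eq_square)

interpretation of_rat_poly_hom: map_poly_idom_hom "of_rat :: rat \<Rightarrow> real" ..

lemma in_OK_norm_int:
  fixes d :: int assumes d: "d > 1" "squarefree d" and ok: "in_OK d a"
  shows "qnorm d a \<in> \<int>"
proof -
  obtain x y where a: "a = (x, y)" by (cases a)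
  from ok obtain p where lc: "lead_coeff p = 1"
    and root: "poly (map_poly real_of_int p) (emb1 d a) = 0" unfolding in_OK_def by blast
  define P where "P = (of_int_poly p :: rat poly)"
  have rootP: "poly (map_poly real_of_rat P) (emb1 d a) = 0" using root by (simp add: P_def map_of_int_rat)
  have s: "sqrt (real_of_int d) * sqrt (real_of_int d) = real_of_int d" using d by simp
  show ?thesis
  proof (cases "y = 0")
    case True
    then have "emb1 d a = real_of_rat x" by (simp add: a emb1_def)
    then have "real_of_rat (poly P x) = 0" using rootP by (simp add: of_rat_hom.poly_map_poly)
    then have "poly P x = 0" by simp
    then have "[:-x, 1:] dvd P" by (simp add: poly_eq_0_iff_dvd)
    from monic_factor_int[OF lc this[unfolded P_def], of 0] have "-x \<in> \<int>" by simp
    then have "x \<in> \<int>" by (metis Ints_minus minus_minus)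
    then show ?thesis by (simp add: qnorm_def a True)
  next
    case False
    define N where "N = x^2 - of_int d * y^2"
    define g where "g = [:N, -2*x, 1:]"
    have g0: "g \<noteq> 0" and dg: "degree g = 2" and lg: "lead_coeff g = 1" by (simp_all add: g_def)
    define r where "r = P mod g"
    have Pdec: "P = g * (P div g) + r" by (simp add: r_def)
    have "degree r < 2 \<or> r = 0" using degree_mod_less[OF g0, of P] dg by (auto simp: r_def)
    then have "degree r \<le> 1" by auto
    then have rlin: "r = [:Polynomial.coeff r 0, Polynomial.coeff r 1:]" by (rule deg1_poly)
    have rootg: "poly (map_poly real_of_rat g) (emb1 d a) = 0"
    proof -
      have "poly (map_poly real_of_rat g) (emb1 d a) = real_of_rat N + (emb1 d a) * (- (2 * real_of_rat x) + emb1 d a)"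
        by (simp add: g_def of_rat_minus of_rat_mult)
      also have "\<dots> = 0" unfolding a emb1_def fst_conv snd_conv
        by (rule alg4[OF s]) (simp add: N_def of_rat_diff of_rat_mult of_rat_power)
      finally show ?thesis .
    qed
    have "poly (map_poly real_of_rat r) (emb1 d a) = 0"
      using rootP rootg by (subst (asm) Pdec) (simp add: hom_distribs of_rat_poly_hom.hom_mult)
    then have "real_of_rat (Polynomial.coeff r 0) + emb1 d a * real_of_rat (Polynomial.coeff r 1) = 0"
      by (subst (asm) rlin) (simp only: lin_map)
    then have "real_of_rat (Polynomial.coeff r 0 + Polynomial.coeff r 1 * x) + real_of_rat (Polynomial.coeff r 1 * y) * sqrt (real_of_int d) = 0"
      by (simp add: a emb1_def of_rat_add of_rat_mult algebra_simps)
    from lin_indep[OF d(1,2) this] False have "Polynomial.coeff r 1 = 0" "Polynomial.coeff r 0 = 0" by auto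
    then have "r = 0" using rlin by simp
    then have "g dvd of_int_poly p" unfolding P_def[symmetric] using Pdec by (metis add_0_right dvd_triv_left)
    from monic_factor_int[OF lc this lg, of 0] have "N \<in> \<int>" by (simp add: g_def)
    then show ?thesis by (simp add: qnorm_def a N_def)
  qed
qed




lemma unit_norm:
  fixes d :: int assumes d: "d > 1" "squarefree d" and u: "is_unit_OK d u"
  shows "qnorm d u = 1 \<or> qnorm d u = -1"
proof -
  obtain v where okv: "in_OK d v" and uv: "qmult d u v = (1, 0)" and oku: "in_OK d u"
    using u unfolding is_unit_OK_def by blast
  have "qnorm d u * qnorm d v = 1" using qnorm_mult[of d u v] uv by (simp add: qnorm_def)
  moreover obtain m where m: "qnorm d u = of_int m" using in_OK_norm_int[OF d oku] by (auto elim: Ints_cases)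
  moreover obtain n where n: "qnorm d v = of_int n" using in_OK_norm_int[OF d okv] by (auto elim: Ints_cases)
  ultimately have "of_int (m * n) = (1::rat)" by simp
  then have "m * n = 1" by (simp only: of_int_eq_1_iff)
  then have "m dvd 1" by (metis dvdI)
  then have "\<bar>m\<bar> = 1" by (simp add: zdvd1_eq)
  then have "m = 1 \<or> m = -1" by auto
  then show ?thesis using m by auto
qed

lemma unit_emb:
  fixes d :: int assumes d: "d > 1" "squarefree d" and u: "is_unit_OK d u"
  shows "emb1 d u \<noteq> 0" "(emb1 d u)^2 * (emb2 d u)^2 = 1"
proof -
  have "emb1 d u * emb2 d u = 1 \<or> emb1 d u * emb2 d u = -1"
    using unit_norm[OF d u] emb_norm[of d u] d by auto
  moreover have "(emb1 d u)^2 * (emb2 d u)^2 = (emb1 d u * emb2 d u)^2" by (simp add: power_mult_distrib)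
  ultimately show "(emb1 d u)^2 * (emb2 d u)^2 = 1" by auto
  from \<open>emb1 d u * emb2 d u = 1 \<or> emb1 d u * emb2 d u = -1\<close> show "emb1 d u \<noteq> 0" by auto
qed

lemma unit_inv:
  fixes d :: int assumes d: "d > 1" and u: "is_unit_OK d u"
  shows "\<exists>v. is_unit_OK d v \<and> emb1 d u * emb1 d v = 1"
proof -
  obtain v where okv: "in_OK d v" and uv: "qmult d u v = (1, 0)" and oku: "in_OK d u"
    using u unfolding is_unit_OK_def by blast
  have "is_unit_OK d v" unfolding is_unit_OK_def using okv oku uv qmult_comm by metis
  moreover have "emb1 d u * emb1 d v = 1"
  proof -
    have "d \<ge> 0" using d by simp
    then show ?thesis using emb1_mult[of d u v] uv by (simp add: emb1_def)
  qed
  ultimately show ?thesis by blast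
qed

definition qneg :: "qelt \<Rightarrow> qelt" where "qneg a = (- fst a, - snd a)"

lemma emb1_qneg: "emb1 d (qneg a) = - emb1 d a"
  by (simp add: emb1_def qneg_def of_rat_minus)

lemma qmult_qneg: "qmult d (qneg a) (qneg b) = qmult d a b"
  by (simp add: qmult_def qneg_def)

lemma in_OK_neg: assumes "in_OK d a" shows "in_OK d (qneg a)"
proof -
  from assms obtain p where lc: "lead_coeff p = 1"
    and root: "poly (map_poly real_of_int p) (emb1 d a) = 0" unfolding in_OK_def by blast
  define q where "q = Polynomial.smult ((-1)^degree p) (p \<circ>\<^sub>p [:0, -1:])"
  have lc2: "lead_coeff (p \<circ>\<^sub>p [:0, -1:]) = lead_coeff p * (-1)^degree p"
    using lead_coeff_comp[of "[:0, -1:]" p] by simp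
  have "lead_coeff q = (-1)^degree p * (lead_coeff p * (-1)^degree p)"
    unfolding q_def lead_coeff_smult lc2 by simp
  also have "\<dots> = 1" using lc by (cases "even (degree p)") simp_all
  finally have lq: "lead_coeff q = 1" .
  have "poly (map_poly real_of_int q) (emb1 d (qneg a)) = (-1)^degree p * poly (map_poly real_of_int p) (emb1 d a)"
  proof -
    have mq: "map_poly real_of_int q = Polynomial.smult ((-1)^degree p) (map_poly real_of_int p \<circ>\<^sub>p [:0, -1:])"
      unfolding q_def by (simp add: of_int_hom.map_poly_hom_smult of_int_hom.map_poly_pcompose Polynomial.map_poly_pCons)
    show ?thesis unfolding mq emb1_qneg by (simp add: poly_pcompose)
  qed
  also have "\<dots> = 0" using root by simp
  finally show ?thesis unfolding in_OK_def using lq by blast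
qed

lemma unit_neg: assumes "is_unit_OK d u" shows "is_unit_OK d (qneg u)"
  using assms in_OK_neg qmult_qneg unfolding is_unit_OK_def by metis

lemma trace_formula: assumes "d \<ge> 0"
  shows "qtrace d (qmult d a (qmult d u u)) = emb1 d a * (emb1 d u)^2 + emb2 d a * (emb2 d u)^2"
  using assms by (simp add: qtrace_def emb1_mult emb2_mult power2_eq_square)



lemma alg5:
  fixes h1 h2 k1 k2 n u v d :: int
  assumes h2: "h2 = h1 + n * u" and k2: "k2 = k1 + n * v" and n1: "n = h1^2 - d * k1^2" and n2: "n = h2^2 - d * k2^2" and n0: "n \<noteq> 0"
  shows "(1 + h1 * u - d * k1 * v)^2 - d * (k1 * u - h1 * v)^2 = 1" and "n * (k1 * u - h1 * v) = k1 * h2 - h1 * k2"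
proof -
  have i1: "(h1 * h2 - d * k1 * k2)^2 - d * (k1 * h2 - h1 * k2)^2 = (h1^2 - d * k1^2) * (h2^2 - d * k2^2)"
    by (simp add: algebra_simps power2_eq_square)
  have "h1 * h2 - d * k1 * k2 = h1 * (h1 + n * u) - d * k1 * (k1 + n * v)" using h2 k2 by simp
  also have "\<dots> = (h1^2 - d * k1^2) + n * (h1 * u - d * k1 * v)"
    by (simp add: algebra_simps power2_eq_square)
  finally have i2: "h1 * h2 - d * k1 * k2 = (h1^2 - d * k1^2) + n * (h1 * u - d * k1 * v)" .
  have "k1 * h2 - h1 * k2 = k1 * (h1 + n * u) - h1 * (k1 + n * v)" using h2 k2 by simp
  also have "\<dots> = n * (k1 * u - h1 * v)" by (simp add: algebra_simps)
  finally have i3: "k1 * h2 - h1 * k2 = n * (k1 * u - h1 * v)" .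
  show "n * (k1 * u - h1 * v) = k1 * h2 - h1 * k2" using i3 by simp
  have "n^2 * ((1 + h1 * u - d * k1 * v)^2 - d * (k1 * u - h1 * v)^2) = n^2 * 1"
  proof -
    have "n^2 * ((1 + h1 * u - d * k1 * v)^2 - d * (k1 * u - h1 * v)^2)
        = (n * (1 + h1 * u - d * k1 * v))^2 - d * (n * (k1 * u - h1 * v))^2"
      by (simp add: algebra_simps power2_eq_square)
    also have "n * (1 + h1 * u - d * k1 * v) = h1 * h2 - d * k1 * k2"
    proof -
      have "h1 * h2 - d * k1 * k2 = n + n * (h1 * u - d * k1 * v)" using i2 n1 by simp
      also have "\<dots> = n * (1 + h1 * u - d * k1 * v)" by (simp add: algebra_simps)
      finally show ?thesis by simp
    qed
    also have "n * (k1 * u - h1 * v) = k1 * h2 - h1 * k2" using i3 by simp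
    also have "(h1 * h2 - d * k1 * k2)^2 - d * (k1 * h2 - h1 * k2)^2 = n * n" using i1 n1 n2 by simp
    finally show ?thesis by (simp add: power2_eq_square)
  qed
  then show "(1 + h1 * u - d * k1 * v)^2 - d * (k1 * u - h1 * v)^2 = 1"
    using n0 by simp
qed



lemma approx_bound:
  fixes d h k :: int assumes d: "d > 1" "squarefree d"
    and hk: "k > 0" "\<bar>sqrt (real_of_int d) - of_int h / of_int k\<bar> < 1 / (of_int k)^2"
  shows "\<bar>h^2 - d*k^2\<bar> \<le> \<lceil>1 + 2 * sqrt (real_of_int d)\<rceil>" "h^2 - d*k^2 \<noteq> 0"
proof -
  define \<theta> where "\<theta> = sqrt (real_of_int d)"
  have th0: "\<theta> \<ge> 0" using d by (simp add: \<theta>_def)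
  have thsq: "\<theta> * \<theta> = of_int d" using d by (simp add: \<theta>_def)
  define e where "e = of_int h - of_int k * \<theta>"
  have kr: "real_of_int k \<ge> 1" using hk by simp
  have "\<bar>e\<bar> = of_int k * \<bar>\<theta> - of_int h / of_int k\<bar>"
    using hk(1) by (simp add: e_def field_simps abs_mult[symmetric] abs_minus_commute)
  also have "\<dots> < of_int k * (1 / (of_int k)^2)"
    using hk unfolding \<theta>_def by (intro mult_strict_left_mono) auto
  also have "\<dots> = 1 / of_int k" using hk(1) by (simp add: power2_eq_square)
  finally have e1: "\<bar>e\<bar> < 1 / of_int k" .
  have "1 / of_int k \<le> (1::real)" using kr by simp
  then have e2: "\<bar>e\<bar> < 1" using e1 by linarith
  have eq: "of_int (h^2 - d*k^2) = e * (e + 2 * of_int k * \<theta>)"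
    using thsq by (simp add: e_def power2_eq_square algebra_simps)
  have "\<bar>e * (e + 2 * of_int k * \<theta>)\<bar> \<le> \<bar>e\<bar> * \<bar>e\<bar> + \<bar>e\<bar> * (2 * of_int k * \<theta>)"
  proof -
    have kt: "2 * of_int k * \<theta> \<ge> 0" using th0 kr by simp
    have "\<bar>e + 2 * of_int k * \<theta>\<bar> \<le> \<bar>e\<bar> + \<bar>2 * of_int k * \<theta>\<bar>" by (rule abs_triangle_ineq)
    also have "\<bar>2 * of_int k * \<theta>\<bar> = 2 * of_int k * \<theta>" using kt by simp
    finally have "\<bar>e + 2 * of_int k * \<theta>\<bar> \<le> \<bar>e\<bar> + 2 * of_int k * \<theta>" .
    then have "\<bar>e\<bar> * \<bar>e + 2 * of_int k * \<theta>\<bar> \<le> \<bar>e\<bar> * (\<bar>e\<bar> + 2 * of_int k * \<theta>)"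
      by (rule mult_left_mono) simp
    moreover have "\<bar>e * (e + 2 * of_int k * \<theta>)\<bar> = \<bar>e\<bar> * \<bar>e + 2 * of_int k * \<theta>\<bar>" by (rule abs_mult)
    moreover have "\<bar>e\<bar> * (\<bar>e\<bar> + 2 * of_int k * \<theta>) = \<bar>e\<bar> * \<bar>e\<bar> + \<bar>e\<bar> * (2 * of_int k * \<theta>)" by (rule distrib_left)
    ultimately show ?thesis by linarith
  qed
  also have "\<dots> \<le> 1 + 2 * \<theta>"
  proof -
    have "\<bar>e\<bar> * \<bar>e\<bar> \<le> 1" using e2 by (intro mult_le_one) auto
    moreover have "\<bar>e\<bar> * (2 * of_int k * \<theta>) \<le> 2 * \<theta>"
    proof -
      have "\<bar>e\<bar> * of_int k \<le> 1" using e1 hk(1) by (simp add: field_simps)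
      then have "(\<bar>e\<bar> * of_int k) * (2 * \<theta>) \<le> 1 * (2 * \<theta>)" using th0 by (intro mult_right_mono) auto
      then show ?thesis by (simp add: algebra_simps)
    qed
    ultimately show ?thesis by linarith
  qed
  finally have "real_of_int \<bar>h^2 - d*k^2\<bar> \<le> 1 + 2 * \<theta>" using eq by simp
  then show "\<bar>h^2 - d*k^2\<bar> \<le> \<lceil>1 + 2 * sqrt (real_of_int d)\<rceil>" unfolding \<theta>_def
    by (metis ceiling_mono ceiling_of_int)
  show "h^2 - d*k^2 \<noteq> 0"
  proof
    assume "h^2 - d*k^2 = 0"
    then have "real_of_int (h ^ 2) = real_of_int (d * k ^2)" by simp
    then have "real_of_int h ^ 2 = real_of_int d * real_of_int k ^2" by simp
    then have "(of_int \<bar>h\<bar> / of_int k)^2 = real_of_int d" using hk(1) by (simp add: field_simps)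
    then have "sqrt (real_of_int d) = of_int \<bar>h\<bar> / of_int k" using hk(1)
      by (intro real_sqrt_unique) auto
    then have "sqrt (real_of_int d) \<in> \<rat>" by simp
    with sqrt_irrat[OF d] show False by simp
  qed
qed

lemma pell:
  fixes d :: int assumes d: "d > 1" "squarefree d"
  shows "\<exists>X Y :: int. X^2 - d*Y^2 = 1 \<and> Y \<noteq> 0"
proof -
  define \<theta> where "\<theta> = sqrt (real_of_int d)"
  define A where "A = approx_set \<theta>"
  have infA: "infinite A" using sqrt_irrat[OF d] rational_iff_finite_approx_set
    unfolding A_def \<theta>_def by blast
  define M where "M = \<lceil>1 + 2 * \<theta>\<rceil>"
  have memA: "k > 0 \<and> algebraic_semidom_class.coprime h k \<and> \<bar>h^2 - d*k^2\<bar> \<le> M \<and> h^2 - d*k^2 \<noteq> 0"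
    if "(h, k) \<in> A" for h k
  proof -
    have hk: "k > 0" "algebraic_semidom_class.coprime h k" "\<bar>\<theta> - of_int h / of_int k\<bar> < 1/(of_int k)^2"
      using that unfolding A_def approx_set_def by auto
    show ?thesis using approx_bound[OF d hk(1) hk(3)[unfolded \<theta>_def]] hk unfolding M_def \<theta>_def by auto
  qed
  define f where "f = (\<lambda>(h::int, k::int). (h^2 - d*k^2, h mod (h^2 - d*k^2), k mod (h^2 - d*k^2)))"
  have modb: "\<bar>a mod n\<bar> \<le> M" if "\<bar>n\<bar> \<le> M" "n \<noteq> 0" for a n :: int
  proof (cases "n > 0")
    case True
    have "a mod n < n" "0 \<le> a mod n" using True by simp_all
    then show ?thesis using that by auto
  next
    case False
    then have "n < 0" using that by auto
    have "a mod n > n" "a mod n \<le> 0" using \<open>n < 0\<close> by simp_all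
    then show ?thesis using that by auto
  qed
  have "f ` A \<subseteq> {-M..M} \<times> {-M..M} \<times> {-M..M}"
  proof
    fix z assume "z \<in> f ` A"
    then obtain h k where hkA: "(h, k) \<in> A" and z: "z = f (h, k)" by auto
    have mm: "\<bar>h^2 - d*k^2\<bar> \<le> M" "h^2 - d*k^2 \<noteq> 0" using memA[OF hkA] by auto
    have "\<bar>h mod (h^2 - d*k^2)\<bar> \<le> M" "\<bar>k mod (h^2 - d*k^2)\<bar> \<le> M" using modb[OF mm] by auto
    with mm show "z \<in> {-M..M} \<times> {-M..M} \<times> {-M..M}"
      unfolding z f_def by (auto simp: abs_le_iff)
  qed
  then have "finite (f ` A)" by (rule finite_subset) auto
  from pigeonhole_infinite[OF infA this] obtain a0 where a0: "a0 \<in> A"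
    and inf0: "infinite {a \<in> A. f a = f a0}" by blast
  have "infinite ({a \<in> A. f a = f a0} - {a0})" using inf0 by simp
  then have "{a \<in> A. f a = f a0} - {a0} \<noteq> {}" by (metis finite.emptyI)
  then obtain a1 where "a1 \<in> {a \<in> A. f a = f a0} - {a0}" by blast
  then have a1: "a1 \<in> A" "f a1 = f a0" "a1 \<noteq> a0" by auto
  obtain h1 k1 where a0e: "a0 = (h1, k1)" by (cases a0)
  obtain h2 k2 where a1e: "a1 = (h2, k2)" by (cases a1)
  define n where "n = h1^2 - d*k1^2"
  have m1: "k1 > 0" "algebraic_semidom_class.coprime h1 k1" "n \<noteq> 0" using memA[OF a0[unfolded a0e]] by (auto simp: n_def)
  have m2: "k2 > 0" "algebraic_semidom_class.coprime h2 k2" using memA[OF a1(1)[unfolded a1e]] by auto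
  have fe: "h2^2 - d*k2^2 = n" "h2 mod n = h1 mod n" "k2 mod n = k1 mod n"
    using a1(2) unfolding a0e a1e f_def n_def by auto
  obtain s where s: "h2 = h1 + n * s" using fe(2) mod_eq_dvd_iff[of h2 n h1]
    by (metis add_diff_cancel_left' diff_add_cancel dvd_def)
  obtain t where t: "k2 = k1 + n * t" using fe(3) mod_eq_dvd_iff[of k2 n k1]
    by (metis add_diff_cancel_left' diff_add_cancel dvd_def)
  define X where "X = 1 + h1 * s - d*k1 * t"
  define Y where "Y = k1 * s - h1 * t"
  have XY: "X^2 - d*Y^2 = 1"
    unfolding X_def Y_def by (rule alg5(1)[OF s t n_def fe(1)[symmetric] m1(3)])
  have "Y \<noteq> 0"
  proof
    assume "Y = 0"
    then have "k1*h2 = h1*k2" using alg5(2)[OF s t n_def fe(1)[symmetric] m1(3)] unfolding Y_def by simp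
    have c1: "algebraic_semidom_class.coprime k1 h1" using m1(2) by (simp add: ac_simps)
    have c2: "algebraic_semidom_class.coprime k2 h2" using m2(2) by (simp add: ac_simps)
    have "k1 dvd h1 * k2" using \<open>k1*h2 = h1*k2\<close> by (metis dvd_triv_left)
    then have "k1 dvd k2" using GCD.coprime_dvd_mult_right_iff[OF c1] by blast
    have "k2 dvd k1 * h2" using \<open>k1*h2 = h1*k2\<close> by (metis dvd_triv_right)
    then have "k2 dvd k1" using GCD.coprime_dvd_mult_left_iff[OF c2] by blast
    note \<open>k1 dvd k2\<close> \<open>k2 dvd k1\<close>
    then have "k1 = k2" using m1(1) m2(1) by (simp add: zdvd_antisym_nonneg)
    with \<open>k1*h2 = h1*k2\<close> m1(1) have "h1 = h2" by simp
    with \<open>k1 = k2\<close> a1(3) show False by (simp add: a0e a1e)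
  qed
  with XY show ?thesis by blast
qed



lemma tanh_ln: fixes x :: real assumes "x > 0" shows "tanh (ln x) = (x^2 - 1) / (x^2 + 1)"
proof -
  have x0: "x \<noteq> 0" using assms by simp
  have ex: "exp (ln x) = x" using assms by simp
  have "tanh (ln x) = (exp (ln x) - exp (- ln x)) / (exp (ln x) + exp (- ln x))"
    by (rule tanh_altdef)
  also have "exp (- ln x) = 1 / x" using ex by (simp add: exp_minus inverse_eq_divide)
  finally have t: "tanh (ln x) = (x - 1/x) / (x + 1/x)" using ex by simp
  have n: "x - 1/x = (x^2 - 1) / x" using x0 by (simp add: power2_eq_square diff_divide_distrib)
  have d: "x + 1/x = (x^2 + 1) / x" using x0 by (simp add: power2_eq_square add_divide_distrib)
  have "((x^2 - 1) / x) / ((x^2 + 1) / x) = (x^2 - 1) / (x^2 + 1)" using x0 by simp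
  then show ?thesis using t n d by simp
qed

lemma div_le_div_pos: "(b::real) > 0 \<Longrightarrow> c > 0 \<Longrightarrow> (a / b \<le> x / c) \<longleftrightarrow> a * c \<le> x * b"
  by (simp add: field_simps)

lemma key_dir1:
  fixes A B T :: real assumes A: "A > 0" and T: "T > 1" and C: "\<bar>B\<bar> * (T + 1) \<le> A * (T - 1)"
  shows "(A + B) + (A - B) \<le> (A + B) * T + (A - B) / T"
proof -
  have T0: "T > 0" using T by simp
  have "(A + B) * T + (A - B) / T - ((A + B) + (A - B)) = (T - 1) * ((A + B) * T - (A - B)) / T"
    using T0 by (simp add: field_simps; simp add: algebra_simps)
  moreover have "(A + B) * T - (A - B) \<ge> 0"
  proof -
    have "(A + B) * T - (A - B) = A * (T - 1) + B * (T + 1)" by (simp add: algebra_simps)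
    moreover have "B * (T + 1) \<ge> - (\<bar>B\<bar> * (T + 1))" using T by (simp add: abs_if)
    ultimately show ?thesis using C by linarith
  qed
  ultimately have "(A + B) * T + (A - B) / T - ((A + B) + (A - B)) \<ge> 0"
    using T0 T by simp
  then show ?thesis by simp
qed

lemma key_dir2:
  fixes A B T :: real assumes A: "A > 0" and T: "T > 1" and C: "\<bar>B\<bar> * (T + 1) \<le> A * (T - 1)"
  shows "(A + B) + (A - B) \<le> (A + B) / T + (A - B) * T"
  using key_dir1[OF A T, of "-B"] C by (simp add: algebra_simps)

lemma key_conv:
  fixes A B T :: real assumes T: "T > 1"
    and h1: "(A + B) + (A - B) \<le> (A + B) * T + (A - B) / T"
    and h2: "(A + B) + (A - B) \<le> (A + B) / T + (A - B) * T"
  shows "\<bar>B\<bar> * (T + 1) \<le> A * (T - 1)"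
proof -
  have T0: "T > 0" using T by simp
  have e1: "(A + B) * T + (A - B) / T - ((A + B) + (A - B)) = (T - 1) * (A * (T - 1) + B * (T + 1)) / T"
    using T0 by (simp add: field_simps; simp add: algebra_simps)
  have e2: "(A + B) / T + (A - B) * T - ((A + B) + (A - B)) = (T - 1) * (A * (T - 1) - B * (T + 1)) / T"
    using T0 by (simp add: field_simps; simp add: algebra_simps)
  have "(T - 1) * (A * (T - 1) + B * (T + 1)) / T \<ge> 0" using h1 e1 by simp
  then have "(T - 1) * (A * (T - 1) + B * (T + 1)) \<ge> 0" using T0 by (simp add: divide_nonneg_pos zero_le_divide_iff)
  then have p1: "A * (T - 1) + B * (T + 1) \<ge> 0" using T by (simp add: zero_le_mult_iff)
  have "(T - 1) * (A * (T - 1) - B * (T + 1)) / T \<ge> 0" using h2 e2 by simp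
  then have "(T - 1) * (A * (T - 1) - B * (T + 1)) \<ge> 0" using T0 by (simp add: zero_le_divide_iff)
  then have p2: "A * (T - 1) - B * (T + 1) \<ge> 0" using T by (simp add: zero_le_mult_iff)
  show ?thesis using p1 p2 T by (cases "B \<ge> 0") (simp_all add: algebra_simps)
qed


lemma alg7:
  fixes t D x y :: real
  assumes "t * t = D" "x^2 - D * y^2 = 1"
  shows "1 + (x + y * t) * (- (2 * x) + (x + y * t)) = 0" "1 + (x - y * t) * (- (2 * x) + (x - y * t)) = 0"
proof -
  have "1 + (x + y * t) * (- (2 * x) + (x + y * t)) = 1 - (x^2 - (t * t) * y^2)"
    by (simp add: algebra_simps power2_eq_square)
  then show "1 + (x + y * t) * (- (2 * x) + (x + y * t)) = 0" using assms by simp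
  have "1 + (x - y * t) * (- (2 * x) + (x - y * t)) = 1 - (x^2 - (t * t) * y^2)"
    by (simp add: algebra_simps power2_eq_square)
  then show "1 + (x - y * t) * (- (2 * x) + (x - y * t)) = 0" using assms by simp
qed

lemma exists_unit_gt1:
  fixes d :: int assumes d: "d > 1" "squarefree d"
  shows "\<exists>u. is_unit_OK d u \<and> emb1 d u > 1"
proof -
  obtain X Y :: int where XY: "X^2 - d*Y^2 = 1" and Y0: "Y \<noteq> 0" using pell[OF d] by blast
  define x :: rat where "x = of_int \<bar>X\<bar>"
  define y :: rat where "y = of_int \<bar>Y\<bar>"
  define \<theta> where "\<theta> = sqrt (real_of_int d)"
  have s: "\<theta> * \<theta> = real_of_int d" using d by (simp add: \<theta>_def)
  have th1: "\<theta> > 1" using d by (simp add: \<theta>_def)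
  have XYr: "(real_of_int \<bar>X\<bar>)^2 - real_of_int d * (real_of_int \<bar>Y\<bar>)^2 = 1"
  proof -
    have "real_of_int (X^2 - d*Y^2) = 1" using XY by simp
    then show ?thesis by simp
  qed
  define p :: "int poly" where "p = [:1, - 2 * \<bar>X\<bar>, 1:]"
  have lp: "lead_coeff p = 1" by (simp add: p_def)
  have mp: "map_poly real_of_int p = [:1, - 2 * real_of_int \<bar>X\<bar>, 1:]"
    by (simp add: p_def Polynomial.map_poly_pCons)
  have e1: "emb1 d (x, y) = real_of_int \<bar>X\<bar> + real_of_int \<bar>Y\<bar> * \<theta>"
    by (simp add: emb1_def x_def y_def \<theta>_def del: of_int_abs)
  have e1': "emb1 d (x, -y) = real_of_int \<bar>X\<bar> - real_of_int \<bar>Y\<bar> * \<theta>"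
    by (simp add: emb1_def x_def y_def \<theta>_def of_rat_minus del: of_int_abs)
  have okx: "in_OK d (x, y)" unfolding in_OK_def
  proof (intro exI conjI)
    show "lead_coeff p = 1" by (rule lp)
    show "poly (map_poly real_of_int p) (emb1 d (x, y)) = 0"
      unfolding mp e1 using alg7(1)[OF s XYr] by simp
  qed
  have oky: "in_OK d (x, -y)" unfolding in_OK_def
  proof (intro exI conjI)
    show "lead_coeff p = 1" by (rule lp)
    show "poly (map_poly real_of_int p) (emb1 d (x, -y)) = 0"
      unfolding mp e1' using alg7(2)[OF s XYr] by simp
  qed
  have XYq: "x^2 - of_int d * y^2 = 1"
  proof -
    have "of_int (X^2 - d*Y^2) = (1::rat)" using XY by simp
    then show ?thesis by (simp add: x_def y_def)
  qed
  have "qmult d (x, y) (x, -y) = (x^2 - of_int d * y^2, 0)"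
    by (simp add: qmult_def power2_eq_square algebra_simps)
  then have "qmult d (x, y) (x, -y) = (1, 0)" using XYq by simp
  then have unit: "is_unit_OK d (x, y)" unfolding is_unit_OK_def using okx oky by blast
  have "real_of_int \<bar>Y\<bar> \<ge> 1" using Y0 by linarith
  then have "real_of_int \<bar>Y\<bar> * \<theta> \<ge> 1 * \<theta>" using th1 by (intro mult_right_mono) auto
  then have "emb1 d (x, y) > 1" unfolding e1 using th1 abs_ge_zero[of "real_of_int X"] by linarith
  with unit show ?thesis by blast
qed



theorem lemma2:
  fixes d :: int and a1 a2 :: rat
  assumes "d > 1" and "squarefree d"
    and "totally_positive d (a1, a2)"
  shows "reduced d (a1, a2) \<longleftrightarrow>
    \<bar>real_of_rat a2\<bar> / real_of_rat a1 \<le> tanh (regulator d) / sqrt (real_of_int d)"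
proof -
  note d = assms(1,2)
  have d0: "d \<ge> 0" using d by simp
  define \<theta> where "\<theta> = sqrt (real_of_int d)"
  have th1: "\<theta> > 1" using d by (simp add: \<theta>_def)
  define A where "A = real_of_rat a1"
  define B where "B = real_of_rat a2 * \<theta>"
  have e1: "emb1 d (a1, a2) = A + B" by (simp add: emb1_def A_def B_def \<theta>_def)
  have e2: "emb2 d (a1, a2) = A - B" by (simp add: emb2_def A_def B_def \<theta>_def)
  have pos: "A + B > 0" "A - B > 0" using assms(3) e1 e2 unfolding totally_positive_def by auto
  have A0: "A > 0" using pos by simp
  have tr: "qtrace d (a1, a2) = (A + B) + (A - B)" by (simp add: qtrace_def e1 e2)
  have absB: "\<bar>B\<bar> = \<bar>real_of_rat a2\<bar> * \<theta>" using th1 by (simp add: B_def abs_mult)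
  have trace_u: "qtrace d (qmult d (a1, a2) (qmult d u u)) = (A + B) * (emb1 d u)^2 + (A - B) / (emb1 d u)^2"
    if u: "is_unit_OK d u" for u
  proof -
    have ne: "emb1 d u \<noteq> 0" and n1: "(emb1 d u)^2 * (emb2 d u)^2 = 1" using unit_emb[OF d u] by auto
    have "(emb2 d u)^2 * (emb1 d u)^2 = 1" using n1 by (simp add: mult.commute)
    then have "(emb2 d u)^2 = 1 / (emb1 d u)^2" using ne by (simp add: eq_divide_eq)
    then show ?thesis using trace_formula[OF d0, of "(a1, a2)" u] e1 e2 by simp
  qed
  define S where "S = {emb1 d u | u. is_unit_OK d u \<and> emb1 d u > 1}"
  have reg: "regulator d = ln (Inf S)" by (simp add: regulator_def S_def)
  have Sne: "S \<noteq> {}" using exists_unit_gt1[OF d] unfolding S_def by blast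
  have Sgt: "s > 1" if "s \<in> S" for s using that unfolding S_def by auto
  have bdd: "bdd_below S" unfolding bdd_below_def using Sgt by (meson less_imp_le)
  define \<epsilon> where "\<epsilon> = Inf S"
  have eps1: "\<epsilon> \<ge> 1" unfolding \<epsilon>_def using Sne Sgt by (meson cInf_greatest less_imp_le)
  have epsle: "\<epsilon> \<le> s" if "s \<in> S" for s unfolding \<epsilon>_def using that bdd by (rule cInf_lower)
  have rhs: "(\<bar>real_of_rat a2\<bar> / real_of_rat a1 \<le> tanh (regulator d) / sqrt (real_of_int d))
      \<longleftrightarrow> \<bar>B\<bar> * (\<epsilon>^2 + 1) \<le> A * (\<epsilon>^2 - 1)"
  proof -
    have t: "tanh (regulator d) = (\<epsilon>^2 - 1) / (\<epsilon>^2 + 1)" unfolding reg \<epsilon>_def[symmetric]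
      using eps1 by (intro tanh_ln) simp
    have p1: "\<epsilon>^2 + 1 > 0" using zero_le_power2[of \<epsilon>] by linarith
    have th0: "\<theta> > 0" using th1 by simp
    have q: "((\<epsilon>^2 - 1) / (\<epsilon>^2 + 1)) / \<theta> = (\<epsilon>^2 - 1) / (\<theta> * (\<epsilon>^2 + 1))" by simp
    have D0: "\<theta> * (\<epsilon>^2 + 1) > 0" using th0 p1 by simp
    have "(\<bar>real_of_rat a2\<bar> / A \<le> ((\<epsilon>^2 - 1) / (\<epsilon>^2 + 1)) / \<theta>)
        \<longleftrightarrow> \<bar>real_of_rat a2\<bar> * (\<theta> * (\<epsilon>^2 + 1)) \<le> (\<epsilon>^2 - 1) * A"
      unfolding q using div_le_div_pos[OF A0 D0] .
    also have "\<dots> \<longleftrightarrow> \<bar>real_of_rat a2\<bar> * \<theta> * (\<epsilon>^2 + 1) \<le> A * (\<epsilon>^2 - 1)"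
      by (simp add: ac_simps)
    finally have "(\<bar>real_of_rat a2\<bar> / A \<le> ((\<epsilon>^2 - 1) / (\<epsilon>^2 + 1)) / \<theta>)
        \<longleftrightarrow> \<bar>real_of_rat a2\<bar> * \<theta> * (\<epsilon>^2 + 1) \<le> A * (\<epsilon>^2 - 1)" .
    then show ?thesis unfolding t \<theta>_def[symmetric] A_def[symmetric] absB by simp
  qed
  have CS: "\<bar>B\<bar> * ((emb1 d w)^2 + 1) \<le> A * ((emb1 d w)^2 - 1)"
    if Ce: "\<bar>B\<bar> * (\<epsilon>^2 + 1) \<le> A * (\<epsilon>^2 - 1)" and w: "is_unit_OK d w" and gt: "\<bar>emb1 d w\<bar> > 1" for w
  proof -
    have "\<bar>emb1 d w\<bar> \<in> S"
    proof (cases "emb1 d w > 1")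
      case True
      then have "\<bar>emb1 d w\<bar> = emb1 d w" by simp
      then show ?thesis unfolding S_def using w True by (intro CollectI exI[of _ w]) simp
    next
      case False
      then have "emb1 d (qneg w) = \<bar>emb1 d w\<bar>" "emb1 d (qneg w) > 1" using gt by (auto simp: emb1_qneg)
      then show ?thesis unfolding S_def using unit_neg[OF w] by (intro CollectI exI[of _ "qneg w"]) auto
    qed
    then have le: "\<epsilon> \<le> \<bar>emb1 d w\<bar>" by (rule epsle)
    have "\<epsilon>^2 \<le> \<bar>emb1 d w\<bar>^2" using le eps1 by (intro power_mono) auto
    then have le2: "\<epsilon>^2 \<le> (emb1 d w)^2" by simp
    have "(A - \<bar>B\<bar>) * \<epsilon>^2 \<ge> A + \<bar>B\<bar>" using Ce by (simp add: algebra_simps)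
    moreover have "A - \<bar>B\<bar> > 0"
    proof (rule ccontr)
      assume "\<not> A - \<bar>B\<bar> > 0"
      then have "(A - \<bar>B\<bar>) * \<epsilon>^2 \<le> 0" by (simp add: mult_nonpos_nonneg)
      moreover have "A + \<bar>B\<bar> > 0" using A0 by simp
      ultimately show False using \<open>(A - \<bar>B\<bar>) * \<epsilon>^2 \<ge> A + \<bar>B\<bar>\<close> by linarith
    qed
    moreover have "(A - \<bar>B\<bar>) * \<epsilon>^2 \<le> (A - \<bar>B\<bar>) * (emb1 d w)^2"
      using le2 \<open>A - \<bar>B\<bar> > 0\<close> by (intro mult_left_mono) auto
    ultimately have "(A - \<bar>B\<bar>) * (emb1 d w)^2 \<ge> A + \<bar>B\<bar>" by linarith
    then show ?thesis by (simp add: algebra_simps)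
  qed
  show ?thesis
  proof
    assume red: "reduced d (a1, a2)"
    have redu: "(A + B) + (A - B) \<le> (A + B) * (emb1 d u)^2 + (A - B) / (emb1 d u)^2"
      if "is_unit_OK d u" for u
    proof -
      have "qtrace d (a1, a2) \<le> qtrace d (qmult d (a1, a2) (qmult d u u))"
        using red that unfolding reduced_def by blast
      then show ?thesis using trace_u[OF that] tr by simp
    qed
    have CSall: "\<bar>B\<bar> * (s^2 + 1) \<le> A * (s^2 - 1)" if sS: "s \<in> S" for s
    proof -
      obtain u where u: "is_unit_OK d u" and su: "emb1 d u = s" and s1: "s > 1"
        using sS unfolding S_def by auto
      obtain v where v: "is_unit_OK d v" and uv: "emb1 d u * emb1 d v = 1" using unit_inv[OF d(1) u] by blast
      have "emb1 d v * s = 1" using uv su by (simp add: mult.commute)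
      then have ev: "emb1 d v = 1 / s" using s1 by (simp add: eq_divide_eq)
      have T1: "s^2 > 1" using s1 by (simp add: one_less_power)
      have h1: "(A + B) + (A - B) \<le> (A + B) * s^2 + (A - B) / s^2" using redu[OF u] su by simp
      have "(A + B) + (A - B) \<le> (A + B) * (1 / s)^2 + (A - B) / (1 / s)^2" using redu[OF v] ev by simp
      then have h2: "(A + B) + (A - B) \<le> (A + B) / s^2 + (A - B) * s^2" by (simp add: power_one_over)
      show ?thesis by (rule key_conv[OF T1 h1 h2])
    qed
    obtain s0 where s0: "s0 \<in> S" using Sne by blast
    have AB: "A - \<bar>B\<bar> > 0"
    proof (rule ccontr)
      assume "\<not> A - \<bar>B\<bar> > 0"
      then have "(A - \<bar>B\<bar>) * s0^2 \<le> 0" by (simp add: mult_nonpos_nonneg)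
      moreover have "(A - \<bar>B\<bar>) * s0^2 \<ge> A + \<bar>B\<bar>" using CSall[OF s0] by (simp add: algebra_simps)
      moreover have "A + \<bar>B\<bar> > 0" using A0 by simp
      ultimately show False by linarith
    qed
    define K where "K = (A + \<bar>B\<bar>) / (A - \<bar>B\<bar>)"
    have K0: "K \<ge> 0" using AB A0 by (simp add: K_def)
    have "sqrt K \<le> s" if "s \<in> S" for s
    proof -
      have "(A - \<bar>B\<bar>) * s^2 \<ge> A + \<bar>B\<bar>" using CSall[OF that] by (simp add: algebra_simps)
      then have "K \<le> s^2" using AB by (simp add: K_def divide_le_eq mult.commute)
      then have "sqrt K \<le> sqrt (s^2)" by (rule real_sqrt_le_mono)
      then show ?thesis using Sgt[OF that] by simp
    qed
    then have "sqrt K \<le> \<epsilon>" unfolding \<epsilon>_def using Sne by (intro cInf_greatest) auto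
    then have "(sqrt K)^2 \<le> \<epsilon>^2" using K0 by (intro power_mono) auto
    then have "K \<le> \<epsilon>^2" using K0 by simp
    then have "(A - \<bar>B\<bar>) * \<epsilon>^2 \<ge> A + \<bar>B\<bar>" using AB by (simp add: K_def divide_le_eq mult.commute)
    then have "\<bar>B\<bar> * (\<epsilon>^2 + 1) \<le> A * (\<epsilon>^2 - 1)" by (simp add: algebra_simps)
    then show "\<bar>real_of_rat a2\<bar> / real_of_rat a1 \<le> tanh (regulator d) / sqrt (real_of_int d)"
      using rhs by simp
  next
    assume "\<bar>real_of_rat a2\<bar> / real_of_rat a1 \<le> tanh (regulator d) / sqrt (real_of_int d)"
    then have Ce: "\<bar>B\<bar> * (\<epsilon>^2 + 1) \<le> A * (\<epsilon>^2 - 1)" using rhs by simp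
    have "qtrace d (a1, a2) \<le> qtrace d (qmult d (a1, a2) (qmult d u u))" if u: "is_unit_OK d u" for u
    proof -
      define T where "T = (emb1 d u)^2"
      have ne: "emb1 d u \<noteq> 0" using unit_emb[OF d u] by auto
      have T0: "T > 0" using ne by (simp add: T_def)
      have goal: "qtrace d (qmult d (a1, a2) (qmult d u u)) = (A + B) * T + (A - B) / T"
        using trace_u[OF u] by (simp add: T_def)
      consider "T > 1" | "T = 1" | "T < 1" by linarith
      then show ?thesis
      proof cases
        case 1
        have "\<bar>emb1 d u\<bar> > 1"
        proof (rule ccontr)
          assume "\<not> \<bar>emb1 d u\<bar> > 1"
          then have "\<bar>emb1 d u\<bar>^2 \<le> 1^2" by (intro power_mono) auto
          then show False using 1 by (simp add: T_def)
        qed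
        from CS[OF Ce u this] have "\<bar>B\<bar> * (T + 1) \<le> A * (T - 1)" by (simp add: T_def)
        from key_dir1[OF A0 1 this] show ?thesis using goal tr by simp
      next
        case 2
        then show ?thesis using goal tr by simp
      next
        case 3
        obtain v where v: "is_unit_OK d v" and uv: "emb1 d u * emb1 d v = 1" using unit_inv[OF d(1) u] by blast
        have "(emb1 d u * emb1 d v)^2 = 1" using uv by simp
        then have "(emb1 d v)^2 * T = 1" by (simp add: T_def power_mult_distrib mult.commute)
        then have Tv: "(emb1 d v)^2 = 1 / T" using T0 by (simp add: eq_divide_eq)
        have Tv1: "1 / T > 1" using T0 3 by simp
        have "\<bar>emb1 d v\<bar> > 1"
        proof (rule ccontr)
          assume "\<not> \<bar>emb1 d v\<bar> > 1"
          then have "\<bar>emb1 d v\<bar>^2 \<le> 1^2" by (intro power_mono) auto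
          then show False using Tv Tv1 by simp
        qed
        from CS[OF Ce v this] have "\<bar>B\<bar> * (1 / T + 1) \<le> A * (1 / T - 1)" by (simp add: Tv)
        from key_dir2[OF A0 Tv1 this] show ?thesis using goal tr T0 by simp
      qed
    qed
    then show "reduced d (a1, a2)" unfolding reduced_def using assms(3) by blast
  qed
qed


end
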